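(* Let $V=\Sigma^aH(b)$ and $W=\Sigma^sH(t)$ be representation cells (so $0\le b\le a$ and $0\le t\le s$) with $a\geq s$, and with $b\geq t$ in case $a=s$. Then for any map $f\colon\Sigma^{-1}V\to W$ in $\mathcal D(\underline{\mathbb Z/2})$, exactly one of the following holds: (1) $\mathrm{tp}(\Sigma^{-1}V)=\mathrm{tp}(W)$ and $\mathrm{cowt}(\Sigma^{-1}V)=\mathrm{cowt}(W)$ (so $\Sigma^{-1}V=W$) and $f$ is homotopic to the identity; (2) $\mathrm{tp}(\Sigma^{-1}V)=\mathrm{tp}(W)$ and $\mathrm{cowt}(\Sigma^{-1}V)>\mathrm{cowt}(W)$, and $f$ is homotopic to the chain map which is the identity $F\to F$ in each degree where $\Sigma^{-1}V$ has an $F$, and is $p\colon H\to F$ in degree $\mathrm{cowt}(\Sigma^{-1}V)$; (3) $\mathrm{tp}(\Sigma^{-1}V)\ge\mathrm{tp}(W)$ and $\mathrm{cowt}(\Sigma^{-1}V)\le\mathrm{cowt}(W)-2$, and $f$ is homotopic to the chain map which is $u\colon F\to F$ in degree $\mathrm{tp}(W)$ and zero in all other degrees; (4) $f$ is null-homotopic.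
   Context: A $\underline{\mathbb Z/2}$-module is a pair of $\mathbb F_2$-vector spaces $M_\Theta,M_\bullet$ with maps $t\colon M_\Theta\to M_\Theta$, $p^*\colon M_\bullet\to M_\Theta$, $p_*\colon M_\Theta\to M_\bullet$ with $tp^*=p^*$, $p_*t=p_*$, $t^2=1$, $p^*p_*=1+t$, $p_*p^*=0$. $H$: both spaces $\mathbb F_2$, $t=p^*=\mathrm{id}$, $p_*=0$. $F$: $F_\Theta=\mathbb F_2^2$, $t$ the swap, $F_\bullet=\mathbb F_2$, $p_*(x,y)=x+y$, $p^*(z)=(z,z)$. $p\colon F\to H$ and $p\colon H\to F$ are the unique nonzero maps; $u=1+t\colon F\to F$. Homological grading, $(\Sigma C)_i=C_{i-1}$. $H(0)=H$ in degree $0$; for $q>0$, $H(q)$ is $F\xrightarrow{u}\cdots\xrightarrow{u}F\xrightarrow{p}H$ with $F$ in degrees $0,\dots,-(q-1)$ and $H$ in degree $-q$. A representation cell is a complex $\Sigma^mH(q)$ with $0\le q\le m$; for such a complex (and its desuspensions $\Sigma^{m-1}H(q)$, treated the same way) the topological dimension $\mathrm{tp}$ is the degree of its top $F$ (namely $m$ for $\Sigma^mH(q)$), the weight is $q$, and the coweight $\mathrm{cowt}$ is the degree $m-q$ of its bottom $H$. $\mathcal D(\underline{\mathbb Z/2})$ is the derived category; "homotopic" means equal in $\mathcal D(\underline{\mathbb Z/2})$ (equivalently chain homotopic, as these complexes are bounded complexes of projectives). *)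

theory Defs
  imports "HOL-Library.Z2" "Jordan_Normal_Form.Matrix"
begin

text \<open>A Z/2-module M is a pair of finite-dimensional F_2-vector spaces M_Theta = F_2^(dT M),
  M_bullet = F_2^(dB M) with the structure maps t (on M_Theta), p^* (M_bullet to M_Theta),
  p_* (M_Theta to M_bullet), given as matrices over the field bit = F_2.\<close>

datatype obj = Zo | Fo | Ho

fun dT :: "obj \<Rightarrow> nat" where
  "dT Zo = 0" | "dT Fo = 2" | "dT Ho = 1"

fun dB :: "obj \<Rightarrow> nat" where
  "dB Zo = 0" | "dB Fo = 1" | "dB Ho = 1"

fun tM :: "obj \<Rightarrow> bit mat" where
  "tM Zo = 0\<^sub>m 0 0"
| "tM Fo = mat_of_rows_list 2 [[0,1],[1,0]]"
| "tM Ho = 1\<^sub>m 1"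

fun pupM :: "obj \<Rightarrow> bit mat" where
  "pupM Zo = 0\<^sub>m 0 0"
| "pupM Fo = mat_of_rows_list 1 [[1],[1]]"
| "pupM Ho = 1\<^sub>m 1"

fun plwM :: "obj \<Rightarrow> bit mat" where
  "plwM Zo = 0\<^sub>m 0 0"
| "plwM Fo = mat_of_rows_list 2 [[1,1]]"
| "plwM Ho = 0\<^sub>m 1 1"

type_synonym mor = "bit mat \<times> bit mat"

definition is_mor :: "obj \<Rightarrow> obj \<Rightarrow> mor \<Rightarrow> bool" where
  "is_mor X Y f \<longleftrightarrow>
     fst f \<in> carrier_mat (dT Y) (dT X) \<and> snd f \<in> carrier_mat (dB Y) (dB X) \<and>
     fst f * tM X = tM Y * fst f \<and>
     fst f * pupM X = pupM Y * snd f \<and>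
     snd f * plwM X = plwM Y * fst f"

definition mcomp :: "mor \<Rightarrow> mor \<Rightarrow> mor" where
  "mcomp g f = (fst g * fst f, snd g * snd f)"

definition madd :: "mor \<Rightarrow> mor \<Rightarrow> mor" where
  "madd f g = (fst f + fst g, snd f + snd g)"

definition msub :: "mor \<Rightarrow> mor \<Rightarrow> mor" where
  "msub f g = (fst f - fst g, snd f - snd g)"

definition idm :: "obj \<Rightarrow> mor" where
  "idm X = (1\<^sub>m (dT X), 1\<^sub>m (dB X))"

definition zerom :: "obj \<Rightarrow> obj \<Rightarrow> mor" where
  "zerom X Y = (0\<^sub>m (dT Y) (dT X), 0\<^sub>m (dB Y) (dB X))"

text \<open>u = 1 + t : F to F\<close>
definition uF :: mor where
  "uF = (mat_of_rows_list 2 [[1,1],[1,1]], 0\<^sub>m 1 1)"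

text \<open>the unique nonzero map p : F to H\<close>
definition pFH :: mor where
  "pFH = (mat_of_rows_list 2 [[1,1]], 0\<^sub>m 1 1)"

text \<open>the unique nonzero map p : H to F\<close>
definition pHF :: mor where
  "pHF = (mat_of_rows_list 1 [[1],[1]], 1\<^sub>m 1)"

text \<open>Chain complexes (homological grading): object in each degree and differential
  d_i : C_i to C_(i-1).\<close>
record cplx =
  cobj :: "int \<Rightarrow> obj"
  cd :: "int \<Rightarrow> mor"

text \<open>A representation cell Sigma^m H(q) (and its desuspensions) is encoded by the pair (m, q).\<close>
type_synonym rcell = "int \<times> int"

definition tp :: "rcell \<Rightarrow> int" where "tp c = fst c"
definition wt :: "rcell \<Rightarrow> int" where "wt c = snd c"
definition cowt :: "rcell \<Rightarrow> int" where "cowt c = fst c - snd c"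

definition desusp :: "rcell \<Rightarrow> rcell" where "desusp c = (fst c - 1, snd c)"

definition cell_obj :: "rcell \<Rightarrow> int \<Rightarrow> obj" where
  "cell_obj c i = (if cowt c < i \<and> i \<le> tp c then Fo else if i = cowt c then Ho else Zo)"

definition cell :: "rcell \<Rightarrow> cplx" where
  "cell c = \<lparr> cobj = cell_obj c,
              cd = (\<lambda>i. if cell_obj c i = Fo \<and> cell_obj c (i - 1) = Fo then uF
                        else if cell_obj c i = Fo \<and> cell_obj c (i - 1) = Ho then pFH
                        else zerom (cell_obj c i) (cell_obj c (i - 1))) \<rparr>"

definition chain_map :: "cplx \<Rightarrow> cplx \<Rightarrow> (int \<Rightarrow> mor) \<Rightarrow> bool" where
  "chain_map C D f \<longleftrightarrow>
     (\<forall>i. is_mor (cobj C i) (cobj D i) (f i) \<and>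
          mcomp (cd D i) (f i) = mcomp (f (i - 1)) (cd C i))"

definition homotopic :: "cplx \<Rightarrow> cplx \<Rightarrow> (int \<Rightarrow> mor) \<Rightarrow> (int \<Rightarrow> mor) \<Rightarrow> bool" where
  "homotopic C D f g \<longleftrightarrow>
     (\<exists>h. (\<forall>i. is_mor (cobj C i) (cobj D (i + 1)) (h i)) \<and>
          (\<forall>i. msub (f i) (g i) = madd (mcomp (cd D (i + 1)) (h i)) (mcomp (h (i - 1)) (cd C i))))"

definition id_chain :: "cplx \<Rightarrow> int \<Rightarrow> mor" where
  "id_chain C i = idm (cobj C i)"

definition zero_chain :: "cplx \<Rightarrow> cplx \<Rightarrow> int \<Rightarrow> mor" where
  "zero_chain C D i = zerom (cobj C i) (cobj D i)"

definition null_homotopic :: "cplx \<Rightarrow> cplx \<Rightarrow> (int \<Rightarrow> mor) \<Rightarrow> bool" where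
  "null_homotopic C D f \<longleftrightarrow> homotopic C D f (zero_chain C D)"

definition cmap2 :: "rcell \<Rightarrow> rcell \<Rightarrow> int \<Rightarrow> mor" where
  "cmap2 X Y i = (if cowt X < i \<and> i \<le> tp X then idm Fo
                 else if i = cowt X then pHF
                 else zerom (cell_obj X i) (cell_obj Y i))"

text \<open>Case (3) map X to Y: u : F to F in degree tp Y, zero elsewhere.  (If Y has weight 0,
  so that Y has an H rather than an F in degree tp Y, the map in that degree is taken to be
  p : F to H.)\<close>
definition cmap3 :: "rcell \<Rightarrow> rcell \<Rightarrow> int \<Rightarrow> mor" where
  "cmap3 X Y i = (if i = tp Y then (if cell_obj Y i = Fo then uF else pFH)
                 else zerom (cell_obj X i) (cell_obj Y i))"

definition exactly_one :: "bool list \<Rightarrow> bool" where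
  "exactly_one ps \<longleftrightarrow> length (filter id ps) = 1"

end

theory Submission
  imports Defs
begin

lemma bit_add_self[simp]: "(x::bit) + x = 0" by (cases x) simp_all
lemma bit_add_self2[simp]: "(x::bit) + (x + y) = y" by (cases x) simp_all

definition mk :: "obj \<Rightarrow> obj \<Rightarrow> bit \<Rightarrow> bit \<Rightarrow> mor" where
 "mk X Y a b = (case (X,Y) of
   (Fo,Fo) \<Rightarrow> (mat 2 2 (\<lambda>(i,j). if i=j then a+b else b), mat 1 1 (\<lambda>_. a))
 | (Fo,Ho) \<Rightarrow> (mat 1 2 (\<lambda>_. a), mat 1 1 (\<lambda>_. 0))
 | (Ho,Fo) \<Rightarrow> (mat 2 1 (\<lambda>_. a), mat 1 1 (\<lambda>_. a))
 | (Ho,Ho) \<Rightarrow> (mat 1 1 (\<lambda>_. a), mat 1 1 (\<lambda>_. a))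
 | _ \<Rightarrow> (0\<^sub>m (dT Y) (dT X), 0\<^sub>m (dB Y) (dB X)))"

lemma less2: "(i::nat) < 2 \<longleftrightarrow> i = 0 \<or> i = 1" by auto

lemma mk_zero: "zerom X Y = mk X Y 0 0"
  by (cases X; cases Y) (auto simp: mk_def zerom_def intro!: eq_matI)

lemma mk_id: "idm X = mk X X 1 0"
  by (cases X) (auto simp: mk_def idm_def less2 intro!: eq_matI)

lemma mk_uF: "uF = mk Fo Fo 0 1"
  by (auto simp: mk_def uF_def less2 mat_of_rows_list_def intro!: eq_matI)

lemma mk_pFH: "pFH = mk Fo Ho 1 0"
  by (auto simp: mk_def pFH_def less2 mat_of_rows_list_def intro!: eq_matI)

lemma mk_pHF: "pHF = mk Ho Fo 1 0"
  by (auto simp: mk_def pHF_def less2 mat_of_rows_list_def intro!: eq_matI)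

definition ca :: "obj \<Rightarrow> obj \<Rightarrow> obj \<Rightarrow> bit \<Rightarrow> bit \<Rightarrow> bit" where
  "ca X Y Z a' a = (if Y = Zo \<or> (X = Z \<and> X \<noteq> Y) then 0 else a' * a)"
definition cb :: "obj \<Rightarrow> obj \<Rightarrow> obj \<Rightarrow> bit \<Rightarrow> bit \<Rightarrow> bit \<Rightarrow> bit \<Rightarrow> bit" where
  "cb X Y Z a' b' a b = (if X = Fo \<and> Y = Fo \<and> Z = Fo then a' * b + b' * a
     else if X = Fo \<and> Y = Ho \<and> Z = Fo then a' * a else 0)"

lemma sum2: "(\<Sum>i\<in>{0..<2::nat}. f i) = f 0 + f 1"
  by (simp add: numeral_2_eq_2)

lemma "mcomp (mk Fo Fo a' b') (mk Fo Fo a b) = mk Fo Fo (ca Fo Fo Fo a' a) (cb Fo Fo Fo a' b' a b)"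
  by (auto simp: mk_def mcomp_def ca_def cb_def less2 scalar_prod_def sum2 algebra_simps intro!: eq_matI)
lemma mk_comp: "mcomp (mk Y Z a' b') (mk X Y a b) = mk X Z (ca X Y Z a' a) (cb X Y Z a' b' a b)"
  by (cases X; cases Y; cases Z)
     (auto simp: mk_def mcomp_def ca_def cb_def less2 scalar_prod_def sum2 algebra_simps intro!: eq_matI)

lemma mk_add: "madd (mk X Y a b) (mk X Y a' b') = mk X Y (a + a') (b + b')"
  by (cases X; cases Y) (auto simp: mk_def madd_def algebra_simps intro!: eq_matI)

lemma mk_sub: "msub (mk X Y a b) (mk X Y a' b') = mk X Y (a + a') (b + b')"
  by (cases X; cases Y) (auto simp: mk_def msub_def algebra_simps intro!: eq_matI)

definition coa :: "obj \<Rightarrow> obj \<Rightarrow> mor \<Rightarrow> bit" where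
  "coa X Y m = (if X = Fo \<and> Y = Fo then snd m $$ (0,0) else fst m $$ (0,0))"
definition cob :: "mor \<Rightarrow> bit" where
  "cob m = fst m $$ (0,1)"

lemma coa_mk: "X \<noteq> Zo \<Longrightarrow> Y \<noteq> Zo \<Longrightarrow> coa X Y (mk X Y a b) = a"
  by (cases X; cases Y) (auto simp: mk_def coa_def)

lemma cob_mk: "cob (mk Fo Fo a b) = b"
  by (auto simp: mk_def cob_def)

lemma mk_eq: "mk X Y a b = mk X Y a' b' \<longleftrightarrow> ((X \<noteq> Zo \<and> Y \<noteq> Zo) \<longrightarrow> a = a') \<and> (X = Fo \<and> Y = Fo \<longrightarrow> b = b')"
  (is "?L \<longleftrightarrow> ?R")
proof
  assume ?L then show ?R using coa_mk[of X Y a b] coa_mk[of X Y a' b'] cob_mk[of a b] cob_mk[of a' b']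
    by metis
next
  assume ?R then show ?L
    by (cases X; cases Y) (auto simp: mk_def)
qed

lemma tMF: "tM Fo = mat 2 2 (\<lambda>(i,j). if i = j then 0 else 1)"
  by (auto simp: mat_of_rows_list_def less2 intro!: eq_matI)
lemma pupF: "pupM Fo = mat 2 1 (\<lambda>_. 1)"
  by (auto simp: mat_of_rows_list_def less2 intro!: eq_matI)
lemma plwF: "plwM Fo = mat 1 2 (\<lambda>_. 1)"
  by (auto simp: mat_of_rows_list_def less2 intro!: eq_matI)
lemma mk_is_mor_FF: "is_mor Fo Fo (mk Fo Fo a b)"
  unfolding is_mor_def tMF pupF plwF
  apply (simp add: mk_def)
  apply (intro conjI; rule eq_matI)
  apply (simp_all add: less2 scalar_prod_def sum2)
  apply (elim disjE; cases a; cases b; simp)+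
  done
lemma mk_is_mor_FH: "is_mor Fo Ho (mk Fo Ho a b)"
  unfolding is_mor_def tMF pupF plwF
  apply (simp add: mk_def)
  apply (intro conjI; rule eq_matI)
  apply (simp_all add: less2 scalar_prod_def sum2)
  apply (elim disjE; cases a; cases b; simp)+
  done
lemma mk_is_mor_HF: "is_mor Ho Fo (mk Ho Fo a b)"
  unfolding is_mor_def tMF pupF plwF
  apply (simp add: mk_def)
  apply (intro conjI; rule eq_matI)
  apply (simp_all add: less2 scalar_prod_def sum2)
  apply (elim disjE; cases a; cases b; simp)+
  done
lemma mk_is_mor_HH: "is_mor Ho Ho (mk Ho Ho a b)"
  unfolding is_mor_def by (simp add: mk_def)
lemma mk_is_mor: "is_mor X Y (mk X Y a b)"
  apply (cases X; cases Y)
  apply (simp_all add: mk_is_mor_FF mk_is_mor_FH mk_is_mor_HF mk_is_mor_HH)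
  apply (auto simp: mk_def is_mor_def mat_of_rows_list_def intro!: eq_matI)
  done

definition m22 :: "bit \<Rightarrow> bit \<Rightarrow> bit \<Rightarrow> bit \<Rightarrow> bit mat" where
  "m22 x y z w = mat 2 2 (\<lambda>(i,j). if i = 0 then (if j = 0 then x else y) else (if j = 0 then z else w))"

lemma m22_eq: "A \<in> carrier_mat 2 2 \<Longrightarrow> A = m22 (A $$ (0,0)) (A $$ (0,1)) (A $$ (1,0)) (A $$ (1,1))"
  by (rule eq_matI) (auto simp: m22_def less2)

lemma m11_eq: "A \<in> carrier_mat 1 1 \<Longrightarrow> A = mat 1 1 (\<lambda>_. A $$ (0,0))"
  by (rule eq_matI) auto

lemma is_mor_FF: assumes "is_mor Fo Fo m" shows "m = mk Fo Fo (coa Fo Fo m) (cob m)"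
proof -
  obtain A B where m: "m = (A,B)" by (cases m)
  from assms have A: "A \<in> carrier_mat 2 2" and B: "B \<in> carrier_mat 1 1"
    and e1: "A * mat 2 2 (\<lambda>(i,j). if i = j then 0 else 1) = mat 2 2 (\<lambda>(i,j). if i = j then 0 else 1) * A"
    and e2: "A * mat 2 1 (\<lambda>_. 1) = mat 2 1 (\<lambda>_. 1) * B"
    unfolding is_mor_def tMF pupF plwF m by auto
  obtain x y z w v where xy: "A = m22 x y z w" "B = mat 1 1 (\<lambda>_. v)"
    using m22_eq[OF A] m11_eq[OF B] by blast
  have e: "m22 x y z w * mat 2 2 (\<lambda>(i,j). if i = j then 0 else 1) = mat 2 2 (\<lambda>(i,j). if i = j then 0 else 1) * m22 x y z w"
     "m22 x y z w * mat 2 1 (\<lambda>_. 1) = mat 2 1 (\<lambda>_. 1) * mat 1 1 (\<lambda>_. v)"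
    using e1 e2 xy by auto
  have "y = z \<and> x = w \<and> x = v + y"
    using arg_cong[where f="\<lambda>M. M $$ (0,0)", OF e(1)] arg_cong[where f="\<lambda>M. M $$ (0,1)", OF e(1)]
      arg_cong[where f="\<lambda>M. M $$ (0,0)", OF e(2)]
    apply (simp add: m22_def scalar_prod_def sum2)
    apply (cases x; cases y; cases z; cases w; cases v; simp)
    done
  then show ?thesis unfolding m xy
    by (cases x; cases y; cases z; cases w; cases v) (auto simp: mk_def coa_def cob_def m22_def less2 intro!: eq_matI)
qed

definition m12 :: "bit \<Rightarrow> bit \<Rightarrow> bit mat" where
  "m12 x y = mat 1 2 (\<lambda>(i,j). if j = 0 then x else y)"
definition m21 :: "bit \<Rightarrow> bit \<Rightarrow> bit mat" where
  "m21 x y = mat 2 1 (\<lambda>(i,j). if i = 0 then x else y)"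
lemma m12_eq: "A \<in> carrier_mat 1 2 \<Longrightarrow> A = m12 (A $$ (0,0)) (A $$ (0,1))"
  by (rule eq_matI) (auto simp: m12_def less2)
lemma m21_eq: "A \<in> carrier_mat 2 1 \<Longrightarrow> A = m21 (A $$ (0,0)) (A $$ (1,0))"
  by (rule eq_matI) (auto simp: m21_def less2)

lemma is_mor_FH: assumes "is_mor Fo Ho m" shows "m = mk Fo Ho (coa Fo Ho m) (cob m)"
proof -
  obtain A B where m: "m = (A,B)" by (cases m)
  from assms have A: "A \<in> carrier_mat 1 2" and B: "B \<in> carrier_mat 1 1"
    and e1: "A * mat 2 2 (\<lambda>(i,j). if i = j then 0 else 1) = 1\<^sub>m 1 * A"
    and e2: "A * mat 2 1 (\<lambda>_. 1) = 1\<^sub>m 1 * B"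
    unfolding is_mor_def tMF pupF plwF m by auto
  obtain x y v where xy: "A = m12 x y" "B = mat 1 1 (\<lambda>_. v)"
    using m12_eq[OF A] m11_eq[OF B] by blast
  have e: "m12 x y * mat 2 2 (\<lambda>(i,j). if i = j then 0 else 1) = 1\<^sub>m 1 * m12 x y"
     "m12 x y * mat 2 1 (\<lambda>_. 1) = 1\<^sub>m 1 * mat 1 1 (\<lambda>_. v)"
    using e1 e2 xy by auto
  have "x = y \<and> v = 0"
    using arg_cong[where f="\<lambda>M. M $$ (0,0)", OF e(1)] arg_cong[where f="\<lambda>M. M $$ (0,0)", OF e(2)]
    apply (simp add: m12_def scalar_prod_def sum2)
    apply (cases x; cases y; cases v; simp)
    done
  then show ?thesis unfolding m xy
    by (cases x; cases y; cases v) (auto simp: mk_def coa_def cob_def m12_def less2 intro!: eq_matI)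
qed

lemma is_mor_HF: assumes "is_mor Ho Fo m" shows "m = mk Ho Fo (coa Ho Fo m) (cob m)"
proof -
  obtain A B where m: "m = (A,B)" by (cases m)
  from assms have A: "A \<in> carrier_mat 2 1" and B: "B \<in> carrier_mat 1 1"
    and e1: "A * 1\<^sub>m 1 = mat 2 2 (\<lambda>(i,j). if i = j then 0 else 1) * A"
    and e2: "A * 1\<^sub>m 1 = mat 2 1 (\<lambda>_. 1) * B"
    unfolding is_mor_def tMF pupF plwF m by auto
  obtain x y v where xy: "A = m21 x y" "B = mat 1 1 (\<lambda>_. v)"
    using m21_eq[OF A] m11_eq[OF B] by blast
  have e: "m21 x y * 1\<^sub>m 1 = mat 2 2 (\<lambda>(i,j). if i = j then 0 else 1) * m21 x y"
     "m21 x y * 1\<^sub>m 1 = mat 2 1 (\<lambda>_. 1) * mat 1 1 (\<lambda>_. v)"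
    using e1 e2 xy by auto
  have "x = y \<and> v = x"
    using arg_cong[where f="\<lambda>M. M $$ (0,0)", OF e(1)] arg_cong[where f="\<lambda>M. M $$ (0,0)", OF e(2)]
    apply (simp add: m21_def scalar_prod_def sum2)
    apply (cases x; cases y; cases v; simp)
    done
  then show ?thesis unfolding m xy
    by (cases x; cases y; cases v) (auto simp: mk_def coa_def cob_def m21_def less2 intro!: eq_matI)
qed

lemma is_mor_HH: assumes "is_mor Ho Ho m" shows "m = mk Ho Ho (coa Ho Ho m) (cob m)"
proof -
  obtain A B where m: "m = (A,B)" by (cases m)
  from assms have A: "A \<in> carrier_mat 1 1" and B: "B \<in> carrier_mat 1 1"
    and e2: "A * 1\<^sub>m 1 = 1\<^sub>m 1 * B"
    unfolding is_mor_def m by auto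
  obtain x v where xy: "A = mat 1 1 (\<lambda>_. x)" "B = mat 1 1 (\<lambda>_. v)"
    using m11_eq[OF A] m11_eq[OF B] by blast
  have "x = v" using arg_cong[where f="\<lambda>M. M $$ (0,0)", OF e2] xy by simp
  then show ?thesis unfolding m xy
    by (auto simp: mk_def coa_def cob_def intro!: eq_matI)
qed

lemma is_mor_Z: assumes "is_mor X Y m" "X = Zo \<or> Y = Zo" shows "m = mk X Y 0 0"
proof -
  obtain A B where m: "m = (A,B)" by (cases m)
  from assms have "A \<in> carrier_mat (dT Y) (dT X)" "B \<in> carrier_mat (dB Y) (dB X)"
    unfolding is_mor_def m by auto
  then show ?thesis using assms(2) unfolding m
    by (cases X; cases Y) (auto simp: mk_def intro!: eq_matI)
qed

lemma is_mor_mk: assumes "is_mor X Y m" shows "m = mk X Y (coa X Y m) (cob m)"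
proof (cases "X = Zo \<or> Y = Zo")
  case True then show ?thesis using is_mor_Z[OF assms True] by (auto simp: mk_eq)
next
  case False then show ?thesis using assms is_mor_FF is_mor_FH is_mor_HF is_mor_HH
    by (cases X; cases Y) auto
qed

definition co :: "int \<Rightarrow> int \<Rightarrow> int \<Rightarrow> obj" where
  "co L U i = (if L < i \<and> i \<le> U then Fo else if i = L then Ho else Zo)"

lemma co_F: "L < i \<Longrightarrow> i \<le> U \<Longrightarrow> co L U i = Fo" by (simp add: co_def)
lemma co_H: "i = L \<Longrightarrow> co L U i = Ho" by (simp add: co_def)
lemma co_Z1: "i < L \<Longrightarrow> co L U i = Zo" by (simp add: co_def)
lemma co_Z2: "U < i \<Longrightarrow> L \<le> U \<Longrightarrow> co L U i = Zo" by (simp add: co_def)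
lemmas co_simps = co_F co_H co_Z1 co_Z2

definition pdv :: "int \<Rightarrow> int \<Rightarrow> int \<Rightarrow> bit" where
  "pdv L U i = (if i = L + 1 \<and> i \<le> U then 1 else 0)"
definition udv :: "int \<Rightarrow> int \<Rightarrow> int \<Rightarrow> bit" where
  "udv L U i = (if L + 1 < i \<and> i \<le> U then 1 else 0)"

lemma cell_obj_co: "cell_obj c i = co (cowt c) (tp c) i"
  by (simp add: cell_obj_def co_def)

lemma cobj_cell: "cobj (cell c) i = co (cowt c) (tp c) i"
  by (simp add: cell_def cell_obj_co)

lemma cd_cell: "cd (cell c) i = mk (co (cowt c) (tp c) i) (co (cowt c) (tp c) (i-1))
     (pdv (cowt c) (tp c) i) (udv (cowt c) (tp c) i)"
  by (auto simp: cell_def cell_obj_co co_def pdv_def udv_def mk_uF mk_pFH mk_zero mk_eq)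

lemma chain_map_mk:
  assumes "chain_map (cell c) (cell e) f"
  shows "f i = mk (co (cowt c) (tp c) i) (co (cowt e) (tp e) i)
           (coa (co (cowt c) (tp c) i) (co (cowt e) (tp e) i) (f i)) (cob (f i))"
  using assms is_mor_mk unfolding chain_map_def cobj_cell by blast

lemma chain_map_eq:
  assumes "chain_map (cell c) (cell e) f"
    and "\<And>i. f i = mk (co (cowt c) (tp c) i) (co (cowt e) (tp e) i) (fa i) (fb i)"
  shows "mk (co (cowt c) (tp c) i) (co (cowt e) (tp e) (i-1))
     (ca (co (cowt c) (tp c) i) (co (cowt e) (tp e) i) (co (cowt e) (tp e) (i-1)) (pdv (cowt e) (tp e) i) (fa i))
     (cb (co (cowt c) (tp c) i) (co (cowt e) (tp e) i) (co (cowt e) (tp e) (i-1)) (pdv (cowt e) (tp e) i) (udv (cowt e) (tp e) i) (fa i) (fb i))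
   = mk (co (cowt c) (tp c) i) (co (cowt e) (tp e) (i-1))
     (ca (co (cowt c) (tp c) i) (co (cowt c) (tp c) (i-1)) (co (cowt e) (tp e) (i-1)) (fa (i-1)) (pdv (cowt c) (tp c) i))
     (cb (co (cowt c) (tp c) i) (co (cowt c) (tp c) (i-1)) (co (cowt e) (tp e) (i-1)) (fa (i-1)) (fb (i-1)) (pdv (cowt c) (tp c) i) (udv (cowt c) (tp c) i))"
proof -
  have "mcomp (cd (cell e) i) (f i) = mcomp (f (i - 1)) (cd (cell c) i)"
    using assms(1) unfolding chain_map_def by blast
  then show ?thesis unfolding cd_cell assms(2) mk_comp .
qed

definition HE where
 "HE LX UX LY UY ea eb (\<gamma>::int \<Rightarrow> bit) (\<delta>::int \<Rightarrow> bit) i \<longleftrightarrow>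
   mk (co LX UX i) (co LY UY i) (ea i) (eb i) =
   mk (co LX UX i) (co LY UY i)
     (ca (co LX UX i) (co LY UY (i+1)) (co LY UY i) (pdv LY UY (i+1)) (\<gamma> i) +
      ca (co LX UX i) (co LX UX (i-1)) (co LY UY i) (\<gamma> (i-1)) (pdv LX UX i))
     (cb (co LX UX i) (co LY UY (i+1)) (co LY UY i) (pdv LY UY (i+1)) (udv LY UY (i+1)) (\<gamma> i) (\<delta> i) +
      cb (co LX UX i) (co LX UX (i-1)) (co LY UY i) (\<gamma> (i-1)) (\<delta> (i-1)) (pdv LX UX i) (udv LX UX i))"

lemma homotopic_iff:
  assumes "\<And>i. f i = mk (co (cowt c) (tp c) i) (co (cowt e) (tp e) i) (fa i) (fb i)"
    and "\<And>i. g i = mk (co (cowt c) (tp c) i) (co (cowt e) (tp e) i) (ga i) (gb i)"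
  shows "homotopic (cell c) (cell e) f g \<longleftrightarrow>
    (\<exists>\<gamma> \<delta>. \<forall>i. HE (cowt c) (tp c) (cowt e) (tp e) (\<lambda>i. fa i + ga i) (\<lambda>i. fb i + gb i) \<gamma> \<delta> i)"
proof
  assume "homotopic (cell c) (cell e) f g"
  then obtain h where hm: "\<And>i. is_mor (cobj (cell c) i) (cobj (cell e) (i + 1)) (h i)"
    and he: "\<And>i. msub (f i) (g i) = madd (mcomp (cd (cell e) (i + 1)) (h i)) (mcomp (h (i - 1)) (cd (cell c) i))"
    unfolding homotopic_def by blast
  define \<gamma> where "\<gamma> i = coa (co (cowt c) (tp c) i) (co (cowt e) (tp e) (i+1)) (h i)" for i
  define \<delta> where "\<delta> i = cob (h i)" for i
  have hmk: "h i = mk (co (cowt c) (tp c) i) (co (cowt e) (tp e) (i+1)) (\<gamma> i) (\<delta> i)" for i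
    using is_mor_mk[OF hm[of i]] unfolding cobj_cell \<gamma>_def \<delta>_def .
  have hmk': "h (i-1) = mk (co (cowt c) (tp c) (i-1)) (co (cowt e) (tp e) i) (\<gamma> (i-1)) (\<delta> (i-1))" for i
    using hmk[of "i-1"] by simp
  have "HE (cowt c) (tp c) (cowt e) (tp e) (\<lambda>i. fa i + ga i) (\<lambda>i. fb i + gb i) \<gamma> \<delta> i" for i
    using he[of i] unfolding HE_def assms cd_cell hmk' by (simp only: hmk add_diff_cancel_right' mk_comp mk_add mk_sub)
  then show "\<exists>\<gamma> \<delta>. \<forall>i. HE (cowt c) (tp c) (cowt e) (tp e) (\<lambda>i. fa i + ga i) (\<lambda>i. fb i + gb i) \<gamma> \<delta> i" by blast
next
  assume "\<exists>\<gamma> \<delta>. \<forall>i. HE (cowt c) (tp c) (cowt e) (tp e) (\<lambda>i. fa i + ga i) (\<lambda>i. fb i + gb i) \<gamma> \<delta> i"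
  then obtain \<gamma> \<delta> where H: "\<And>i. HE (cowt c) (tp c) (cowt e) (tp e) (\<lambda>i. fa i + ga i) (\<lambda>i. fb i + gb i) \<gamma> \<delta> i" by blast
  define h where "h i = mk (co (cowt c) (tp c) i) (co (cowt e) (tp e) (i+1)) (\<gamma> i) (\<delta> i)" for i
  show "homotopic (cell c) (cell e) f g"
    unfolding homotopic_def
  proof (intro exI[of _ h] conjI allI)
    show "is_mor (cobj (cell c) i) (cobj (cell e) (i + 1)) (h i)" for i
      unfolding h_def cobj_cell by (rule mk_is_mor)
    have hmk': "h (i-1) = mk (co (cowt c) (tp c) (i-1)) (co (cowt e) (tp e) i) (\<gamma> (i-1)) (\<delta> (i-1))" for i
      by (simp add: h_def)
    show "msub (f i) (g i) = madd (mcomp (cd (cell e) (i + 1)) (h i)) (mcomp (h (i - 1)) (cd (cell c) i))" for i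
      using H[of i] unfolding HE_def assms cd_cell hmk' by (simp only: h_def add_diff_cancel_right' mk_comp mk_add mk_sub)
  qed
qed

declare add_bit_eq_xor[simp del] mult_bit_eq_and[simp del]

definition CEq where
 "CEq LX UX LY UY (fa::int\<Rightarrow>bit) fb i \<longleftrightarrow>
   mk (co LX UX i) (co LY UY (i-1))
     (ca (co LX UX i) (co LY UY i) (co LY UY (i-1)) (pdv LY UY i) (fa i))
     (cb (co LX UX i) (co LY UY i) (co LY UY (i-1)) (pdv LY UY i) (udv LY UY i) (fa i) (fb i))
   = mk (co LX UX i) (co LY UY (i-1))
     (ca (co LX UX i) (co LX UX (i-1)) (co LY UY (i-1)) (fa (i-1)) (pdv LX UX i))
     (cb (co LX UX i) (co LX UX (i-1)) (co LY UY (i-1)) (fa (i-1)) (fb (i-1)) (pdv LX UX i) (udv LX UX i))"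

lemma chain_CEq:
  assumes "chain_map (cell c) (cell e) f"
    and "\<And>i. f i = mk (co (cowt c) (tp c) i) (co (cowt e) (tp e) i) (fa i) (fb i)"
  shows "CEq (cowt c) (tp c) (cowt e) (tp e) fa fb i"
  unfolding CEq_def by (rule chain_map_eq[OF assms])

lemma const_up:
  fixes i k m :: int
  assumes "\<And>i. k < i \<Longrightarrow> i \<le> m \<Longrightarrow> v i = v (i-1)" "k \<le> i" "i \<le> m"
  shows "v i = (v k :: 'a)"
  using assms(2,3)
proof (induction i rule: int_ge_induct)
  case base then show ?case by simp
next
  case (step i) then show ?case using assms(1)[of "i+1"] by simp
qed

lemma ssum_step: "(i::int) \<le> U \<Longrightarrow> (\<Sum>j\<in>{i-1<..U}. w j) = w i + (\<Sum>j\<in>{i<..U}. (w j::bit))"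
proof -
  assume "i \<le> U"
  then have "{i-1<..U} = insert i {i<..U}" by auto
  then show ?thesis by simp
qed

lemma ssum_empty: "(U::int) \<le> i \<Longrightarrow> (\<Sum>j\<in>{i<..U}. (w j::bit)) = 0"
  by simp

lemma sum_split_first: "(L::int) \<le> U \<Longrightarrow> (\<Sum>j\<in>{L..U}. w j) = w L + (\<Sum>j\<in>{L<..U}. (w j::bit))"
proof -
  assume "L \<le> U"
  then have "{L..U} = insert L {L<..U}" by auto
  then show ?thesis by simp
qed

lemma bit_eq_add: "(x::bit) = y + z \<longleftrightarrow> x + y = z"
  by (metis add.assoc add.commute add_0_right bit_add_self)

lemma R3_fa:
  assumes ce: "\<And>i. CEq LX UX LY UY fa fb i" and r: "LX + 2 \<le> LY" "LY \<le> UY" "UY \<le> UX"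
    and i: "LY < i" "i \<le> UY"
  shows "fa i = 0"
proof -
  have base: "fa (LY+1) = 0" if "LY + 1 \<le> UY"
    using ce[of "LY+1"] r that by (simp add: CEq_def co_simps mk_eq ca_def cb_def pdv_def udv_def)
  have step: "fa j = fa (j-1)" if "LY+1 < j" "j \<le> UY" for j
    using ce[of j] r that by (simp add: CEq_def co_simps mk_eq ca_def cb_def pdv_def udv_def)
  have "fa i = fa (LY+1)" by (rule const_up[where v=fa and k="LY+1" and m=UY, OF step]) (use i in auto)
  with base i show ?thesis by simp
qed

definition wv :: "int \<Rightarrow> (int \<Rightarrow> bit) \<Rightarrow> (int \<Rightarrow> bit) \<Rightarrow> int \<Rightarrow> bit" where
  "wv L ea eb j = (if j = L then ea j else eb j)"

lemmas HEsimps = HE_def co_simps mk_eq ca_def cb_def pdv_def udv_def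

lemma R3_S:
  assumes r: "LX + 2 \<le> LY" "LY \<le> UY" "UY \<le> UX"
    and ea0: "\<And>i. LY < i \<Longrightarrow> i \<le> UY \<Longrightarrow> ea i = 0"
    and I0: "(\<Sum>j\<in>{LY..UY}. wv LY ea eb j) = 0"
  shows "\<exists>\<gamma> \<delta>. \<forall>i. HE LX UX LY UY ea eb \<gamma> \<delta> i"
proof (intro exI allI)
  fix i
  define \<gamma> where "\<gamma> i = (\<Sum>j\<in>{i<..UY}. wv LY ea eb j)" for i
  have gstep: "\<gamma> (j-1) = wv LY ea eb j + \<gamma> j" if "j \<le> UY" for j
    unfolding \<gamma>_def using that by (rule ssum_step)
  have gtop: "\<gamma> UY = 0" unfolding \<gamma>_def by simp
  have gLY: "ea LY = \<gamma> LY"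
    using I0 sum_split_first[OF r(2), of "wv LY ea eb"] unfolding \<gamma>_def
    by (simp add: wv_def bit_eq_add)
  consider "i < LY" | "i = LY" "LY < UY" | "i = LY" "LY = UY" | "LY < i" "i \<le> UY" | "UY < i"
    using r by linarith
  then show "HE LX UX LY UY ea eb \<gamma> (\<lambda>_. 0) i"
  proof cases
    case 1 then show ?thesis using r by (simp add: HEsimps)
  next
    case 2 then show ?thesis using r gLY by (simp add: HEsimps)
  next
    case 3 then show ?thesis using r gLY gtop by (simp add: HEsimps)
  next
    case 4
    then consider "i < UY" | "i = UY" by linarith
    then show ?thesis
    proof cases
      case 1 then show ?thesis using 4 r ea0[of i] gstep[of i] by (auto simp add: HEsimps wv_def add.commute)
    next
      case 2 then show ?thesis using 4 r ea0[of i] gstep[of i] gtop by (auto simp add: HEsimps wv_def add.commute)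
    qed
  next
    case 5 then show ?thesis using r by (simp add: HEsimps)
  qed
qed

lemma sum_ext_last: "(L::int) \<le> k + 1 \<Longrightarrow> (\<Sum>j\<in>{L..k+1}. w j) = (\<Sum>j\<in>{L..k}. (w j::bit)) + w (k+1)"
proof -
  assume "L \<le> k + 1"
  then have "{L..k+1} = insert (k+1) {L..k}" by auto
  then show ?thesis by (simp add: add.commute)
qed

lemma R3_N:
  assumes r: "LX + 2 \<le> LY" "LY \<le> UY" "UY \<le> UX"
    and H: "\<And>i. HE LX UX LY UY ea eb \<gamma> \<delta> i"
  shows "(\<Sum>j\<in>{LY..UY}. wv LY ea eb j) = 0"
proof (cases "LY = UY")
  case True
  then have "ea LY = 0" using H[of LY] r by (simp add: HEsimps)
  then show ?thesis using True by (simp add: wv_def)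
next
  case False
  have hLY: "ea LY = \<gamma> LY" using H[of LY] r False by (simp add: HEsimps)
  have hmid: "eb j = \<gamma> j + \<gamma> (j-1)" if "LY < j" "j < UY" for j
    using H[of j] r that by (simp add: HEsimps)
  have htop: "eb UY = \<gamma> (UY-1)" using H[of UY] r False by (simp add: HEsimps)
  have P: "(\<Sum>j\<in>{LY..k}. wv LY ea eb j) = \<gamma> k" if "LY \<le> k" "k < UY" for k
    using that
  proof (induction k rule: int_ge_induct)
    case base then show ?case using hLY by (simp add: wv_def)
  next
    case (step k)
    have "(\<Sum>j\<in>{LY..k+1}. wv LY ea eb j) = (\<Sum>j\<in>{LY..k}. wv LY ea eb j) + wv LY ea eb (k+1)"
      using step by (intro sum_ext_last) simp
    also have "\<dots> = \<gamma> k + (\<gamma> (k+1) + \<gamma> k)" using step hmid[of "k+1"] by (simp add: wv_def)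
    also have "\<dots> = \<gamma> (k+1)" by (metis add.assoc add.commute add_0_right bit_add_self)
    finally show ?case .
  qed
  have "(\<Sum>j\<in>{LY..UY}. wv LY ea eb j) = (\<Sum>j\<in>{LY..UY-1}. wv LY ea eb j) + wv LY ea eb (UY-1+1)"
    using sum_ext_last[of LY "UY-1" "wv LY ea eb"] r by simp
  also have "\<dots> = \<gamma> (UY-1) + \<gamma> (UY-1)" using P[of "UY-1"] htop r False by (simp add: wv_def)
  finally show ?thesis by simp
qed

declare add_bit_eq_xor[simp del] mult_bit_eq_and[simp del]
lemma F_A:
  assumes ce: "\<And>i. CEq LX UX LY UY fa fb i" and r: "LY \<le> LX"
    and i: "LX \<le> i" "i \<le> UX" "i \<le> UY"
  shows "fa i = fa LX"
proof -
  have step: "fa j = fa (j-1)" if "LX < j" "j \<le> min UX UY" for j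
  proof (cases "j = LX + 1")
    case True
    show ?thesis
    proof (cases "LX = LY")
      case True
      then show ?thesis using ce[of j] r that \<open>j = LX + 1\<close> by (simp add: CEq_def co_simps mk_eq ca_def cb_def pdv_def udv_def)
    next
      case False
      then show ?thesis using ce[of j] r that \<open>j = LX + 1\<close> by (simp add: CEq_def co_simps mk_eq ca_def cb_def pdv_def udv_def)
    qed
  next
    case False
    then show ?thesis using ce[of j] r that by (simp add: CEq_def co_simps mk_eq ca_def cb_def pdv_def udv_def)
  qed
  show ?thesis by (rule const_up[where v=fa and k=LX and m="min UX UY", OF step]) (use i in auto)
qed

declare add_bit_eq_xor[simp del] mult_bit_eq_and[simp del]
lemma F_top:
  assumes ce: "\<And>i. CEq LX UX LY UY fa fb i" and r: "LY \<le> LX" "LX \<le> UY" "UY < UX"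
  shows "fa UY = 0"
proof -
  consider "LX < UY" | "LX = UY" "LY < UY" | "LX = UY" "LY = UY" using r by linarith
  then show ?thesis
  proof cases
    case 1 then show ?thesis using ce[of "UY+1"] r by (simp add: CEq_def co_simps mk_eq ca_def cb_def pdv_def udv_def)
  next
    case 2 then show ?thesis using ce[of "UY+1"] r by (simp add: CEq_def co_simps mk_eq ca_def cb_def pdv_def udv_def)
  next
    case 3 then show ?thesis using ce[of "UY+1"] r by (simp add: CEq_def co_simps mk_eq ca_def cb_def pdv_def udv_def)
  qed
qed

declare add_bit_eq_xor[simp del] mult_bit_eq_and[simp del]
lemma F_B:
  assumes ce: "\<And>i. CEq LX UX LY UY fa fb i" and r: "LX < LY"
    and i: "LY < i" "i \<le> UX" "i \<le> UY"
  shows "fa i = 0"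
proof -
  have base: "fa (LY+1) = 0" if "LY + 1 \<le> UY" "LY + 1 \<le> UX"
    using ce[of "LY+1"] r that by (simp add: CEq_def co_simps mk_eq ca_def cb_def pdv_def udv_def)
  have step: "fa j = fa (j-1)" if "LY+1 < j" "j \<le> min UX UY" for j
    using ce[of j] r that by (simp add: CEq_def co_simps mk_eq ca_def cb_def pdv_def udv_def)
  have "fa i = fa (LY+1)" by (rule const_up[where v=fa and k="LY+1" and m="min UX UY", OF step]) (use i in auto)
  with base i show ?thesis by simp
qed

declare add_bit_eq_xor[simp del] mult_bit_eq_and[simp del]
lemma N_A:
  assumes r: "LY \<le> LX" "LX \<le> UY" "LX \<le> UX"
    and H: "HE LX UX LY UY ea eb \<gamma> \<delta> LX"
  shows "ea LX = 0"
proof -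
  consider "LX = LY" "LX < UY" | "LX = LY" "LX = UY" | "LY < LX" "LX < UY" | "LY < LX" "LX = UY" using r by linarith
  then show ?thesis
    by cases (use H r in \<open>simp_all add: HEsimps\<close>)
qed

lemma S_A:
  assumes r: "LY \<le> LX" "LX \<le> UX" "UY \<le> UX" "LY \<le> UY"
    and ea0: "\<And>i. LX \<le> i \<Longrightarrow> i \<le> UY \<Longrightarrow> ea i = 0"
  shows "\<exists>\<gamma> \<delta>. \<forall>i. HE LX UX LY UY ea eb \<gamma> \<delta> i"
proof (intro exI allI)
  fix i
  define \<gamma> where "\<gamma> i = (\<Sum>j\<in>{i<..UY}. eb j)" for i
  have gstep: "\<gamma> (j-1) = eb j + \<gamma> j" if "j \<le> UY" for j
    unfolding \<gamma>_def using that by (rule ssum_step)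
  have gtop: "\<gamma> UY = 0" unfolding \<gamma>_def by simp
  show "HE LX UX LY UY ea eb \<gamma> (\<lambda>_. 0) i"
  proof (cases "i < LX \<or> UY < i")
    case True
    then consider "i < LX" | "UY < i" by blast
    then show ?thesis by cases (use r in \<open>simp_all add: HEsimps\<close>)
  next
    case False
    then have i: "LX \<le> i" "i \<le> UY" by auto
    have ei: "ea i = 0" using ea0 i by blast
    consider "i = LX" | "i = LX + 1" | "LX + 1 < i" using i by linarith
    then show ?thesis
    proof cases
      case 1
      then consider "LX = LY" "i < UY" | "LX = LY" "i = UY" | "LY < LX" "i < UY" | "LY < LX" "i = UY"
        using r i by linarith
      then show ?thesis by cases (use r ei 1 in \<open>simp_all add: HEsimps\<close>)
    next
      case 2
      then consider "i < UY" | "i = UY" using i by linarith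
      then show ?thesis by cases (use r ei i 2 gstep[of i] gtop in \<open>simp_all add: HEsimps add.commute\<close>)
    next
      case 3
      then consider "i < UY" | "i = UY" using i by linarith
      then show ?thesis by cases (use r ei i 3 gstep[of i] gtop in \<open>simp_all add: HEsimps add.commute\<close>)
    qed
  qed
qed

lemma S_B:
  assumes r: "LX + 1 = LY" "LY \<le> UY" "UY \<le> UX"
    and ea0: "\<And>i. LY < i \<Longrightarrow> i \<le> UY \<Longrightarrow> ea i = 0"
  shows "\<exists>\<gamma> \<delta>. \<forall>i. HE LX UX LY UY ea eb \<gamma> \<delta> i"
proof (intro exI allI)
  fix i
  define \<gamma> where "\<gamma> i = (\<Sum>j\<in>{i<..UY}. wv LY ea eb j)" for i
  have gstep: "\<gamma> (j-1) = wv LY ea eb j + \<gamma> j" if "j \<le> UY" for j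
    unfolding \<gamma>_def using that by (rule ssum_step)
  have gtop: "\<gamma> UY = 0" unfolding \<gamma>_def by simp
  consider "i < LY" | "i = LY" "LY < UY" | "i = LY" "LY = UY" | "LY < i" "i < UY" | "LY < i" "i = UY" | "UY < i"
    using r by linarith
  then show "HE LX UX LY UY ea eb \<gamma> (\<lambda>_. 0) i"
  proof cases
    case 1 then show ?thesis using r by (simp add: HEsimps)
  next
    case 2 then show ?thesis using r gstep[of i] by (simp add: HEsimps wv_def)
  next
    case 3 then show ?thesis using r gstep[of i] gtop by (simp add: HEsimps wv_def)
  next
    case 4 then show ?thesis using r ea0[of i] gstep[of i] by (auto simp add: HEsimps wv_def add.commute)
  next
    case 5 then show ?thesis using r ea0[of i] gstep[of i] gtop by (auto simp add: HEsimps wv_def add.commute)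
  next
    case 6 then show ?thesis using r by (simp add: HEsimps)
  qed
qed

lemma S_C:
  assumes r: "LX < LY" "UX + 1 = UY" "LY \<le> UY"
    and ea0: "\<And>i. LY < i \<Longrightarrow> i \<le> UX \<Longrightarrow> ea i = 0"
  shows "\<exists>\<gamma> \<delta>. \<forall>i. HE LX UX LY UY ea eb \<gamma> \<delta> i"
proof (intro exI allI)
  fix i
  define \<gamma> where "\<gamma> i = (\<Sum>j\<in>{LY..i}. wv LY ea eb j)" for i
  have gstep: "\<gamma> j = \<gamma> (j-1) + wv LY ea eb j" if "LY \<le> j" for j
    unfolding \<gamma>_def using sum_ext_last[of LY "j-1" "wv LY ea eb"] that by simp
  have gbot: "\<gamma> (LY-1) = 0" unfolding \<gamma>_def by simp
  consider "i < LY" | "UX < i" | "i = LY" "LY - 1 = LX" "i \<le> UX" | "i = LY" "LY - 1 > LX" "i \<le> UX" | "LY < i" "i \<le> UX"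
    using r by linarith
  then show "HE LX UX LY UY ea eb \<gamma> (\<lambda>_. 0) i"
  proof cases
    case 1 then show ?thesis using r by (simp add: HEsimps)
  next
    case 2 then show ?thesis using r by (simp add: HEsimps)
  next
    case 3 then show ?thesis using r gstep[of i] gbot by (simp add: HEsimps wv_def)
  next
    case 4 then show ?thesis using r gstep[of i] gbot by (simp add: HEsimps wv_def)
  next
    case 5 then show ?thesis using r ea0[of i] gstep[of i] by (auto simp add: HEsimps wv_def add.commute)
  qed
qed

lemma zero_mk: "zero_chain (cell c) (cell e) i = mk (co (cowt c) (tp c) i) (co (cowt e) (tp e) i) 0 0"
  by (simp add: zero_chain_def cobj_cell mk_zero)

lemma id_mk: "id_chain (cell e) i = mk (co (cowt e) (tp e) i) (co (cowt e) (tp e) i) 1 0"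
  by (simp add: id_chain_def cobj_cell mk_id)

lemma cmap2_mk:
  assumes "cowt e < cowt c" "tp c = tp e" "cowt c \<le> tp c"
  shows "cmap2 c e i = mk (co (cowt c) (tp c) i) (co (cowt e) (tp e) i) (if cowt c \<le> i \<and> i \<le> tp c then 1 else 0) 0"
proof -
  consider "cowt c < i \<and> i \<le> tp c" | "i = cowt c" | "\<not> (cowt c < i \<and> i \<le> tp c)" "i \<noteq> cowt c" by blast
  then show ?thesis
  proof cases
    case 1 then show ?thesis using assms by (simp add: cmap2_def mk_id co_simps)
  next
    case 2 then show ?thesis using assms by (auto simp add: cmap2_def mk_pHF co_simps co_def)
  next
    case 3 then show ?thesis using assms by (auto simp add: cmap2_def mk_zero cell_obj_co mk_eq)
  qed
qed

lemma cmap3_mk: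
  assumes "cowt c < cowt e" "tp e \<le> tp c" "cowt e \<le> tp e"
  shows "cmap3 c e i = mk (co (cowt c) (tp c) i) (co (cowt e) (tp e) i)
     (if i = tp e \<and> cowt e = tp e then 1 else 0) (if i = tp e then 1 else 0)"
proof -
  consider "i = tp e" "cowt e < tp e" | "i = tp e" "cowt e = tp e" | "i \<noteq> tp e" using assms by linarith
  then show ?thesis
  proof cases
    case 1 then show ?thesis using assms by (simp add: cmap3_def mk_uF co_simps cell_obj_co)
  next
    case 2 then show ?thesis using assms by (simp add: cmap3_def mk_pFH co_simps cell_obj_co mk_eq)
  next
    case 3 then show ?thesis using assms by (auto simp add: cmap3_def mk_zero cell_obj_co mk_eq)
  qed
qed

lemma wv_add: "wv L (\<lambda>i. fa i + ga i) (\<lambda>i. fb i + gb i) j = wv L fa fb j + wv L ga gb j"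
  by (simp add: wv_def)

theorem lemma8p7:
  fixes a b s t :: int and f :: "int \<Rightarrow> mor"
  assumes "0 \<le> b" and "b \<le> a" and "0 \<le> t" and "t \<le> s"
    and "a \<ge> s" and "a = s \<longrightarrow> b \<ge> t"
    and "chain_map (cell (desusp (a, b))) (cell (s, t)) f"
  shows "exactly_one
    [ tp (desusp (a, b)) = tp (s, t) \<and> cowt (desusp (a, b)) = cowt (s, t) \<and>
        homotopic (cell (desusp (a, b))) (cell (s, t)) f (id_chain (cell (s, t))),
      tp (desusp (a, b)) = tp (s, t) \<and> cowt (desusp (a, b)) > cowt (s, t) \<and>
        homotopic (cell (desusp (a, b))) (cell (s, t)) f (cmap2 (desusp (a, b)) (s, t)),
      tp (desusp (a, b)) \<ge> tp (s, t) \<and> cowt (desusp (a, b)) \<le> cowt (s, t) - 2 \<and>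
        homotopic (cell (desusp (a, b))) (cell (s, t)) f (cmap3 (desusp (a, b)) (s, t)),
      null_homotopic (cell (desusp (a, b))) (cell (s, t)) f ]"
proof -
  define LX where "LX = a - 1 - b"
  define UX where "UX = a - 1"
  define LY where "LY = s - t"
  define UY where "UY = s"
  have tcX: "cowt (desusp (a,b)) = LX" "tp (desusp (a,b)) = UX"
    by (simp_all add: LX_def UX_def cowt_def tp_def desusp_def)
  have tcY: "cowt (s,t) = LY" "tp (s,t) = UY"
    by (simp_all add: LY_def UY_def cowt_def tp_def)
  have ar: "LX \<le> UX" "LY \<le> UY" "UY \<le> UX + 1" "UX + 1 = UY \<Longrightarrow> LX < LY"
    using assms(1-6) by (auto simp: LX_def UX_def LY_def UY_def)
  note cm = assms(7)
  define fa where "fa i = coa (co LX UX i) (co LY UY i) (f i)" for i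
  define fb where "fb i = cob (f i)" for i
  have fmk: "f i = mk (co LX UX i) (co LY UY i) (fa i) (fb i)" for i
    using chain_map_mk[OF cm, of i] unfolding tcX tcY fa_def fb_def .
  have ce: "CEq LX UX LY UY fa fb i" for i
    using chain_CEq[OF cm, of fa fb i] fmk unfolding tcX tcY by blast
  have hiff: "homotopic (cell (desusp (a,b))) (cell (s,t)) f g \<longleftrightarrow>
      (\<exists>\<gamma> \<delta>. \<forall>i. HE LX UX LY UY (\<lambda>i. fa i + ga i) (\<lambda>i. fb i + gb i) \<gamma> \<delta> i)"
    if "\<And>i. g i = mk (co LX UX i) (co LY UY i) (ga i) (gb i)" for g ga gb
    using homotopic_iff[where c="desusp (a,b)" and e="(s,t)", unfolded tcX tcY, OF fmk that] .
  have zmk: "zero_chain (cell (desusp (a,b))) (cell (s,t)) i = mk (co LX UX i) (co LY UY i) 0 0" for i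
    using zero_mk[of "desusp (a,b)" "(s,t)" i] unfolding tcX tcY .
  have niff: "null_homotopic (cell (desusp (a,b))) (cell (s,t)) f \<longleftrightarrow>
      (\<exists>\<gamma> \<delta>. \<forall>i. HE LX UX LY UY fa fb \<gamma> \<delta> i)"
    unfolding null_homotopic_def using hiff[of _ "\<lambda>_. 0" "\<lambda>_. 0", OF zmk] by simp
  have main: "exactly_one [UX = UY \<and> LX = LY \<and> homotopic (cell (desusp (a, b))) (cell (s, t)) f (id_chain (cell (s, t))),
       UX = UY \<and> LY < LX \<and> homotopic (cell (desusp (a, b))) (cell (s, t)) f (cmap2 (desusp (a, b)) (s, t)),
       UY \<le> UX \<and> LX \<le> LY - 2 \<and> homotopic (cell (desusp (a, b))) (cell (s, t)) f (cmap3 (desusp (a, b)) (s, t)),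
       null_homotopic (cell (desusp (a, b))) (cell (s, t)) f]"
  proof (cases "UX + 1 = UY")
    case True
    note Q4a = True
        have P4: "null_homotopic (cell (desusp (a, b))) (cell (s, t)) f"
          unfolding niff by(rule S_C) (use Q4a ar in simp_all, use Q4a ar F_B[OF ce] in simp)
        show ?thesis using P4 Q4a by (simp add: exactly_one_def)
  next
    case False
    then have UYle: "UY \<le> UX" using ar by linarith
    show ?thesis
    proof (cases "LX + 2 \<le> LY")
      case True
      note R3 = UYle True
          define ga where "ga i = (if i = UY \<and> LY = UY then 1 else (0::bit))" for i
          define gb where "gb i = (if i = UY then 1 else (0::bit))" for i
          have gmk: "cmap3 (desusp (a, b)) (s, t) i = mk (co LX UX i) (co LY UY i) (ga i) (gb i)" for i
            using cmap3_mk[of "desusp (a,b)" "(s,t)" i] R3 ar unfolding tcX tcY ga_def gb_def by simp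
          have h3: "homotopic (cell (desusp (a, b))) (cell (s, t)) f (cmap3 (desusp (a, b)) (s, t)) \<longleftrightarrow>
              (\<exists>\<gamma> \<delta>. \<forall>i. HE LX UX LY UY (\<lambda>i. fa i + ga i) (\<lambda>i. fb i + gb i) \<gamma> \<delta> i)"
            using hiff[OF gmk] .
          have fB: "fa i = 0" if "LY < i" "i \<le> UY" for i
            using F_B[OF ce, of i] R3 ar that by simp
          define If where "If = (\<Sum>j\<in>{LY..UY}. wv LY fa fb j)"
          have Ig: "(\<Sum>j\<in>{LY..UY}. wv LY ga gb j) = 1"
          proof -
            have "wv LY ga gb j = (if j = UY then 1 else 0)" for j
              by (auto simp: wv_def ga_def gb_def)
            then show ?thesis using ar by simp
          qed
          have Isum: "(\<Sum>j\<in>{LY..UY}. wv LY (\<lambda>i. fa i + ga i) (\<lambda>i. fb i + gb i) j) = If + 1"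
            unfolding wv_add sum.distrib If_def Ig ..
          have Isum0: "(\<Sum>j\<in>{LY..UY}. wv LY fa fb j) = If" unfolding If_def ..
          show ?thesis
          proof (cases "If = 1")
            case True
            have P3: "homotopic (cell (desusp (a, b))) (cell (s, t)) f (cmap3 (desusp (a, b)) (s, t))"
              unfolding h3 by(rule R3_S) (use R3 ar in simp_all, use fB ga_def in simp, use True Isum in simp)
            have P4: "\<not> null_homotopic (cell (desusp (a, b))) (cell (s, t)) f"
proof
assume "null_homotopic (cell (desusp (a, b))) (cell (s, t)) f"
then obtain \<gamma> \<delta> where H: "\<And>i. HE LX UX LY UY fa fb \<gamma> \<delta> i" unfolding niff by blast
have "If = 0" using R3_N[OF _ _ _ H] R3 ar Isum0 by simp
with True show False by simp
qed
            show ?thesis using P3 P4 R3 by (simp add: exactly_one_def)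
          next
            case False
            then have F0: "If = 0" by simp
            have P4: "null_homotopic (cell (desusp (a, b))) (cell (s, t)) f"
              unfolding niff by(rule R3_S) (use R3 ar in simp_all, use fB in simp, use F0 Isum0 in simp)
            have P3: "\<not> homotopic (cell (desusp (a, b))) (cell (s, t)) f (cmap3 (desusp (a, b)) (s, t))"
unfolding h3
proof
assume "\<exists>\<gamma> \<delta>. \<forall>i. HE LX UX LY UY (\<lambda>i. fa i + ga i) (\<lambda>i. fb i + gb i) \<gamma> \<delta> i"
then obtain \<gamma> \<delta> where H: "\<And>i. HE LX UX LY UY (\<lambda>i. fa i + ga i) (\<lambda>i. fb i + gb i) \<gamma> \<delta> i" by blast
have "If + 1 = 0" using R3_N[OF _ _ _ H] R3 ar Isum by simp
with F0 show False by simp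
qed
            show ?thesis using P3 P4 R3 by (simp add: exactly_one_def)
          qed
    next
      case False
      then have nR3: "\<not> LX + 2 \<le> LY" .
      show ?thesis
      proof (cases "LX + 1 = LY")
        case True
        note Q4b = UYle True
            have P4: "null_homotopic (cell (desusp (a, b))) (cell (s, t)) f"
              unfolding niff by(rule S_B) (use Q4b ar in simp_all, use Q4b ar F_B[OF ce] in simp)
            show ?thesis using P4 Q4b by (simp add: exactly_one_def)
      next
        case False
        then have LYle: "LY \<le> LX" using nR3 by linarith
        show ?thesis
        proof (cases "UX = UY")
          case True
          note UXeq = True
          show ?thesis
          proof (cases "LX = LY")
            case True
            note R1 = UXeq True
                have gmk: "id_chain (cell (s,t)) i = mk (co LX UX i) (co LY UY i) 1 0" for i
                  using id_mk[of "(s,t)" i] R1 unfolding tcY by simp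
                have h1: "homotopic (cell (desusp (a, b))) (cell (s, t)) f (id_chain (cell (s, t))) \<longleftrightarrow>
                    (\<exists>\<gamma> \<delta>. \<forall>i. HE LX UX LY UY (\<lambda>i. fa i + 1) (\<lambda>i. fb i + 0) \<gamma> \<delta> i)"
                  using hiff[of _ "\<lambda>_. 1" "\<lambda>_. 0", OF gmk] .
                have fA: "fa i = fa LX" if "LX \<le> i" "i \<le> UY" for i
                  using F_A[OF ce, of i] R1 ar that by simp
                show ?thesis
                proof (cases "fa LX = 1")
                  case True
                  have P1: "homotopic (cell (desusp (a, b))) (cell (s, t)) f (id_chain (cell (s, t)))"
                    unfolding h1
proof (rule S_A)
  fix i assume i: "LX \<le> i" "i \<le> UY"
  have "fa i = 1" using fA[OF i] True by simp
  then show "fa i + 1 = 0" using i R1 ar by simp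
qed (use R1 ar in simp_all)
                  have P4: "\<not> null_homotopic (cell (desusp (a, b))) (cell (s, t)) f"
proof
assume "null_homotopic (cell (desusp (a, b))) (cell (s, t)) f"
then obtain \<gamma> \<delta> where H: "\<And>i. HE LX UX LY UY fa fb \<gamma> \<delta> i" unfolding niff by blast
have "fa LX = 0" using N_A[OF _ _ _ H[of LX]] R1 ar  by simp
with True show False by simp
qed
                  show ?thesis using P1 P4 R1 by (simp add: exactly_one_def)
                next
                  case False
                  then have F0: "fa LX = 0" by simp
                  have P4: "null_homotopic (cell (desusp (a, b))) (cell (s, t)) f"
                    unfolding niff
proof (rule S_A)
  fix i assume i: "LX \<le> i" "i \<le> UY"
  show "fa i = 0" using fA[OF i] F0 by simp
qed (use R1 ar in simp_all)
                  have P1: "\<not> homotopic (cell (desusp (a, b))) (cell (s, t)) f (id_chain (cell (s, t)))"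
unfolding h1
proof
assume "\<exists>\<gamma> \<delta>. \<forall>i. HE LX UX LY UY (\<lambda>i. fa i + 1) (\<lambda>i. fb i + 0) \<gamma> \<delta> i"
then obtain \<gamma> \<delta> where H: "\<And>i. HE LX UX LY UY (\<lambda>i. fa i + 1) (\<lambda>i. fb i + 0) \<gamma> \<delta> i" by blast
have "fa LX + 1 = 0" using N_A[OF _ _ _ H[of LX]] R1 ar  by simp
with F0 show False by simp
qed
                  show ?thesis using P1 P4 R1 by (simp add: exactly_one_def)
                qed
          next
            case False
            then have "LY < LX" using LYle by linarith
            note R2 = UXeq this
                have gmk: "cmap2 (desusp (a, b)) (s, t) i = mk (co LX UX i) (co LY UY i) (if LX \<le> i \<and> i \<le> UX then 1 else 0) 0" for i
                  using cmap2_mk[of "(s,t)" "desusp (a,b)" i] R2 ar unfolding tcX tcY by simp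
                have h2: "homotopic (cell (desusp (a, b))) (cell (s, t)) f (cmap2 (desusp (a, b)) (s, t)) \<longleftrightarrow>
                    (\<exists>\<gamma> \<delta>. \<forall>i. HE LX UX LY UY (\<lambda>i. fa i + (if LX \<le> i \<and> i \<le> UX then 1 else 0)) (\<lambda>i. fb i + 0) \<gamma> \<delta> i)"
                  using hiff[OF gmk] .
                have fA: "fa i = fa LX" if "LX \<le> i" "i \<le> UY" for i
                  using F_A[OF ce, of i] R2 ar that by simp
                show ?thesis
                proof (cases "fa LX = 1")
                  case True
                  have P2: "homotopic (cell (desusp (a, b))) (cell (s, t)) f (cmap2 (desusp (a, b)) (s, t))"
                    unfolding h2
proof (rule S_A)
  fix i assume i: "LX \<le> i" "i \<le> UY"
  have "fa i = 1" using fA[OF i] True by simp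
  then show "fa i + (if LX \<le> i \<and> i \<le> UX then 1 else 0) = 0" using i R2 ar by simp
qed (use R2 ar in simp_all)
                  have P4: "\<not> null_homotopic (cell (desusp (a, b))) (cell (s, t)) f"
proof
assume "null_homotopic (cell (desusp (a, b))) (cell (s, t)) f"
then obtain \<gamma> \<delta> where H: "\<And>i. HE LX UX LY UY fa fb \<gamma> \<delta> i" unfolding niff by blast
have "fa LX = 0" using N_A[OF _ _ _ H[of LX]] R2 ar  by simp
with True show False by simp
qed
                  show ?thesis using P2 P4 R2 by (simp add: exactly_one_def)
                next
                  case False
                  then have F0: "fa LX = 0" by simp
                  have P4: "null_homotopic (cell (desusp (a, b))) (cell (s, t)) f"
                    unfolding niff
proof (rule S_A)
  fix i assume i: "LX \<le> i" "i \<le> UY"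
  show "fa i = 0" using fA[OF i] F0 by simp
qed (use R2 ar in simp_all)
                  have P2: "\<not> homotopic (cell (desusp (a, b))) (cell (s, t)) f (cmap2 (desusp (a, b)) (s, t))"
unfolding h2
proof
assume "\<exists>\<gamma> \<delta>. \<forall>i. HE LX UX LY UY (\<lambda>i. fa i + (if LX \<le> i \<and> i \<le> UX then 1 else 0)) (\<lambda>i. fb i + 0) \<gamma> \<delta> i"
then obtain \<gamma> \<delta> where H: "\<And>i. HE LX UX LY UY (\<lambda>i. fa i + (if LX \<le> i \<and> i \<le> UX then 1 else 0)) (\<lambda>i. fb i + 0) \<gamma> \<delta> i" by blast
have "fa LX + 1 = 0" using N_A[OF _ _ _ H[of LX]] R2 ar  by simp
with F0 show False by simp
qed
                  show ?thesis using P2 P4 R2 by (simp add: exactly_one_def)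
                qed
          qed
        next
          case False
          then have "UY < UX" using UYle by linarith
          note Q4c = this LYle
            have fz: "fa i = 0" if "LX \<le> i" "i \<le> UY" for i
            proof -
              have "fa i = fa LX" using F_A[OF ce, of i] Q4c that by simp
              moreover have "fa UY = fa LX" using F_A[OF ce, of UY] Q4c that by simp
              moreover have "fa UY = 0" using F_top[OF ce] Q4c that by simp
              ultimately show ?thesis by simp
            qed
            have P4: "null_homotopic (cell (desusp (a, b))) (cell (s, t)) f"
              unfolding niff by (rule S_A) (use Q4c ar in simp_all, use fz in simp)
            show ?thesis using P4 Q4c by (simp add: exactly_one_def)

        qed
      qed
    qed
  qed
  then show ?thesis unfolding tcX tcY .
qed

end
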